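(* Let $n \geq 1$ and $i \in \mathbb{Z}_{\geq 2}$. Then $\dim_{\mathbb{F}_2} \mathrm{Gov}(V_{[n]}, i) = (i-1)\binom{n}{i}$.
   Context: $V_{[n]} = \mathbb{F}_2^n$ with standard basis $e_1,\dots,e_n$ and dual basis $\chi_1,\dots,\chi_n$ ($\chi_s(e_{s'}) = \delta_{s,s'}$). $\mathrm{Multi}(V_{[n]}, i)$ is the space of multilinear maps $V_{[n]}^i \to \mathbb{F}_2$, and $\chi_{h_1}\otimes\cdots\otimes\chi_{h_i}$ denotes $(\sigma_1,\dots,\sigma_i)\mapsto \prod_s \chi_{h_s}(\sigma_s)$. For $A \subseteq [n]$ with $\#A = i \geq 2$ and $x \in A$, the governing tensor is $\phi_{(A,x)} = \sum_{\tau} \chi_{\tau(1)}\otimes\cdots\otimes\chi_{\tau(i)}$, the sum over bijections $\tau: \{1,\dots,i\} \to A$ with $\tau(i-1) = x$ or $\tau(i) = x$. $\mathrm{Gov}(V_{[n]}, i)$ is the span of all $\phi_{(A,x)}$ with $A \subseteq [n]$, $\#A = i$, $x \in A$. *)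

theory Defs
  imports Complex_Main "HOL-Library.Z2" "HOL-Library.FuncSet" "HOL-Library.Function_Algebras"
begin

text \<open>V_[n] = F_2^n is represented by functions v :: nat => bit
  supported on {1..n} (v k is the k-th coordinate, i.e. chi_k(v)).  An i-tuple of
  vectors is a function sigma :: nat => (nat => bit), with sigma s in V_[n] for
  s in {1..i} and sigma s = 0 otherwise.  Maps V_[n]^i -> F_2 are functions on such
  tuples, extended by 0 outside, forming an F_2-vector space under pointwise operations.\<close>

definition Vn :: "nat \<Rightarrow> (nat \<Rightarrow> bit) set" where
  "Vn n = {v. \<forall>k. k \<notin> {1..n} \<longrightarrow> v k = 0}"

definition tuples :: "nat \<Rightarrow> nat \<Rightarrow> (nat \<Rightarrow> nat \<Rightarrow> bit) set" where
  "tuples n i = {\<sigma>. (\<forall>s\<in>{1..i}. \<sigma> s \<in> Vn n) \<and> (\<forall>s. s \<notin> {1..i} \<longrightarrow> \<sigma> s = 0)}"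

definition chi :: "nat \<Rightarrow> (nat \<Rightarrow> bit) \<Rightarrow> bit" where
  "chi h v = v h"

definition tensor :: "nat \<Rightarrow> nat \<Rightarrow> (nat \<Rightarrow> nat) \<Rightarrow> (nat \<Rightarrow> nat \<Rightarrow> bit) \<Rightarrow> bit" where
  "tensor n i h = (\<lambda>\<sigma>. if \<sigma> \<in> tuples n i then (\<Prod>s\<in>{1..i}. chi (h s) (\<sigma> s)) else 0)"

definition gov_tensor :: "nat \<Rightarrow> nat set \<Rightarrow> nat \<Rightarrow> (nat \<Rightarrow> nat \<Rightarrow> bit) \<Rightarrow> bit" where
  "gov_tensor n A x = (let i = card A in
     (\<Sum>\<tau>\<in>{\<tau> \<in> {1..i} \<rightarrow>\<^sub>E A. bij_betw \<tau> {1..i} A \<and> (\<tau> (i - 1) = x \<or> \<tau> i = x)}.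
        tensor n i \<tau>))"

definition F2scale :: "bit \<Rightarrow> ((nat \<Rightarrow> nat \<Rightarrow> bit) \<Rightarrow> bit) \<Rightarrow> ((nat \<Rightarrow> nat \<Rightarrow> bit) \<Rightarrow> bit)" where
  "F2scale c f = (\<lambda>\<sigma>. c * f \<sigma>)"

definition Gov :: "nat \<Rightarrow> nat \<Rightarrow> ((nat \<Rightarrow> nat \<Rightarrow> bit) \<Rightarrow> bit) set" where
  "Gov n i = module.span F2scale
     {gov_tensor n A x | A x. A \<subseteq> {1..n} \<and> card A = i \<and> x \<in> A}"

end

theory Submission
  imports Defs
begin


lemma sum_fun_apply: "(\<Sum>x\<in>S. f x) \<sigma> = (\<Sum>x\<in>S. f x \<sigma>)"
  by (induction S rule: infinite_finite_induct) auto

global_interpretation F2: vector_space F2scale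
  by unfold_locales (auto simp: F2scale_def fun_eq_iff algebra_simps)

definition sig :: "nat \<Rightarrow> (nat \<Rightarrow> nat) \<Rightarrow> nat \<Rightarrow> nat \<Rightarrow> bit" where
  "sig i \<tau> = (\<lambda>s. if s \<in> {1..i} then (\<lambda>j. if j = \<tau> s then 1 else 0) else 0)"

lemma sig_tuples: "\<tau> ` {1..i} \<subseteq> {1..n} \<Longrightarrow> sig i \<tau> \<in> tuples n i"
  unfolding sig_def tuples_def Vn_def by auto

lemma prod_bit01: "finite S \<Longrightarrow> (\<Prod>s\<in>S. (if P s then 1 else 0::bit)) = (if \<forall>s\<in>S. P s then 1 else 0)"
  by (induction S rule: finite_induct) auto

lemma tensor_sig: assumes "\<tau> ` {1..i} \<subseteq> {1..n}"
  shows "tensor n i h (sig i \<tau>) = (if \<forall>s\<in>{1..i}. h s = \<tau> s then 1 else 0)"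
proof -
  have "tensor n i h (sig i \<tau>) = (\<Prod>s\<in>{1..i}. (if h s = \<tau> s then 1 else 0::bit))"
    unfolding tensor_def using sig_tuples[OF assms]
    by (auto intro!: prod.cong simp: chi_def sig_def)
  then show ?thesis by (simp add: prod_bit01)
qed

lemma gov_sig:
  assumes "card A = i" "A' \<subseteq> {1..n}" "\<tau> \<in> {1..i} \<rightarrow>\<^sub>E A'" "bij_betw \<tau> {1..i} A'"
  shows "gov_tensor n A x (sig i \<tau>) = (if A = A' \<and> (\<tau> (i - 1) = x \<or> \<tau> i = x) then 1 else 0)"
proof -
  let ?S = "{\<tau> \<in> {1..i} \<rightarrow>\<^sub>E A. bij_betw \<tau> {1..i} A \<and> (\<tau> (i - 1) = x \<or> \<tau> i = x)}"
  have im: "\<tau> ` {1..i} \<subseteq> {1..n}" using assms(2,3) by auto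
  have fin: "finite ?S"
  proof (cases "finite A")
    case True then show ?thesis by (intro finite_subset[OF _ finite_PiE[of "{1..i}" "\<lambda>_. A"]]) auto
  next
    case False then have "i = 0" using assms(1) by simp
    then show ?thesis by simp
  qed
  have "gov_tensor n A x (sig i \<tau>) = (\<Sum>t\<in>?S. tensor n i t (sig i \<tau>))"
    unfolding gov_tensor_def Let_def assms(1) sum_fun_apply ..
  also have "\<dots> = (\<Sum>t\<in>?S. if t = \<tau> then 1 else 0)"
  proof (rule sum.cong[OF refl])
    fix t assume t: "t \<in> ?S"
    have "(\<forall>s\<in>{1..i}. t s = \<tau> s) = (t = \<tau>)"
      using t assms(3) by (auto simp: PiE_def extensional_def fun_eq_iff)
    then show "tensor n i t (sig i \<tau>) = (if t = \<tau> then 1 else 0)"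
      by (simp add: tensor_sig[OF im])
  qed
  also have "\<dots> = (if \<tau> \<in> ?S then 1 else 0)"
    using fin by (simp add: sum.delta')
  also have "(\<tau> \<in> ?S) = (A = A' \<and> (\<tau> (i - 1) = x \<or> \<tau> i = x))"
  proof -
    have e: "bij_betw \<tau> {1..i} A \<Longrightarrow> A = A'" using bij_betw_imp_surj_on assms(4) by metis
    show ?thesis using e assms(3,4) by auto
  qed
  finally show ?thesis .
qed

lemma exists_tau:
  assumes "finite A" "card A = i" "i \<ge> 2" "y \<in> A" "m \<in> A" "y \<noteq> m"
  shows "\<exists>\<tau>. \<tau> \<in> {1..i} \<rightarrow>\<^sub>E A \<and> bij_betw \<tau> {1..i} A \<and> \<tau> (i - 1) = y \<and> \<tau> i = m"
proof -
  have "card (A - {y, m}) = card {1..i-2}" using assms by (simp add: card_Diff_subset)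
  then obtain g where g: "bij_betw g {1..i-2} (A - {y, m})"
    using finite_same_card_bij assms(1) by (metis finite_Diff finite_atLeastAtMost)
  define \<tau> where "\<tau> = (\<lambda>s. if s \<in> {1..i} then (if s = i - 1 then y else if s = i then m else g s) else undefined)"
  have img: "\<tau> ` {1..i} = A"
  proof
    show "\<tau> ` {1..i} \<subseteq> A"
    proof
      fix a assume "a \<in> \<tau> ` {1..i}"
      then obtain s where s: "s \<in> {1..i}" "a = \<tau> s" by auto
      show "a \<in> A"
      proof (cases "s = i - 1 \<or> s = i")
        case True then show ?thesis using s assms by (auto simp: \<tau>_def)
      next
        case False then have "s \<in> {1..i-2}" using s by auto
        then show ?thesis using s False g bij_betw_imp_surj_on[OF g] by (auto simp: \<tau>_def)
      qed
    qed
  next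
    show "A \<subseteq> \<tau> ` {1..i}"
    proof
      fix a assume a: "a \<in> A"
      show "a \<in> \<tau> ` {1..i}"
      proof (cases "a = y \<or> a = m")
        case True
        then show ?thesis using assms
          by (auto simp: \<tau>_def image_iff intro!: bexI[of _ "i - 1"] bexI[of _ i])
      next
        case False
        then have "a \<in> g ` {1..i-2}" using a bij_betw_imp_surj_on[OF g] by auto
        then obtain s where s: "s \<in> {1..i-2}" "a = g s" by auto
        then have "\<tau> s = a" using assms(3) by (auto simp: \<tau>_def)
        moreover have "s \<in> {1..i}" using s by auto
        ultimately show ?thesis by force
      qed
    qed
  qed
  have "inj_on \<tau> {1..i}"
    by (rule eq_card_imp_inj_on) (use img assms in auto)
  then have "bij_betw \<tau> {1..i} A" using img by (simp add: bij_betw_def)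
  moreover have "\<tau> \<in> {1..i} \<rightarrow>\<^sub>E A" using img by (auto simp: \<tau>_def[symmetric] PiE_def extensional_def) (auto simp: \<tau>_def)
  moreover have "\<tau> (i - 1) = y" "\<tau> i = m" using assms(3) by (auto simp: \<tau>_def)
  ultimately show ?thesis by blast
qed

lemma gov_sum_zero:
  assumes "finite A" "card A = i" "i \<ge> 2"
  shows "(\<Sum>x\<in>A. gov_tensor n A x) = 0"
proof (rule ext)
  fix \<sigma>
  let ?B = "{\<tau> \<in> {1..i} \<rightarrow>\<^sub>E A. bij_betw \<tau> {1..i} A}"
  let ?R = "\<lambda>x \<tau>. \<tau> (i - 1) = x \<or> \<tau> i = x"
  have finB: "finite ?B" by (rule finite_subset[OF _ finite_PiE[of "{1..i}" "\<lambda>_. A"]]) (use assms in auto)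
  have "(\<Sum>x\<in>A. gov_tensor n A x) \<sigma> = (\<Sum>x\<in>A. \<Sum>\<tau>\<in>{\<tau>\<in>?B. ?R x \<tau>}. tensor n i \<tau> \<sigma>)"
    unfolding sum_fun_apply gov_tensor_def Let_def assms(2)
    by (intro sum.cong refl) (auto simp: sum_fun_apply intro!: sum.cong)
  also have "\<dots> = (\<Sum>\<tau>\<in>?B. \<Sum>x\<in>{x\<in>A. ?R x \<tau>}. tensor n i \<tau> \<sigma>)"
    by (rule sum.swap_restrict[OF assms(1) finB])
  also have "\<dots> = (\<Sum>\<tau>\<in>?B. 0)"
  proof (rule sum.cong[OF refl])
    fix \<tau> assume t: "\<tau> \<in> ?B"
    have ne: "\<tau> (i - 1) \<noteq> \<tau> i"
    proof -
      have "inj_on \<tau> {1..i}" using t by (simp add: bij_betw_def)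
      moreover have "i - 1 \<in> {1..i}" "i \<in> {1..i}" "i - 1 \<noteq> i" using assms(3) by auto
      ultimately show ?thesis by (metis inj_on_eq_iff)
    qed
    have "{x\<in>A. ?R x \<tau>} = {\<tau> (i - 1), \<tau> i}" using t assms(3) by auto
    then show "(\<Sum>x\<in>{x\<in>A. ?R x \<tau>}. tensor n i \<tau> \<sigma>) = 0" using ne by simp
  qed
  finally show "(\<Sum>x\<in>A. gov_tensor n A x) \<sigma> = 0 \<sigma>" by simp
qed


definition Idx :: "nat \<Rightarrow> nat \<Rightarrow> (nat set \<times> nat) set" where
  "Idx n i = {(A, x). A \<subseteq> {1..n} \<and> card A = i \<and> x \<in> A \<and> x \<noteq> Max A}"

lemma key:
  assumes "i \<ge> 2" "(A', y) \<in> Idx n i"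
  shows "\<exists>\<sigma>. \<forall>A x. (A, x) \<in> Idx n i \<longrightarrow> gov_tensor n A x \<sigma> = (if A = A' \<and> x = y then 1 else 0)"
proof -
  have A': "A' \<subseteq> {1..n}" "card A' = i" "y \<in> A'" "y \<noteq> Max A'" using assms(2) by (auto simp: Idx_def)
  have fin: "finite A'" using A'(1) finite_subset by blast
  have m: "Max A' \<in> A'" using fin A'(3) by (auto intro: Max_in)
  obtain \<tau> where t: "\<tau> \<in> {1..i} \<rightarrow>\<^sub>E A'" "bij_betw \<tau> {1..i} A'" "\<tau> (i - 1) = y" "\<tau> i = Max A'"
    using exists_tau[OF fin A'(2) assms(1) A'(3) m A'(4)] by blast
  show ?thesis
  proof (intro exI allI impI)
    fix A x assume ax: "(A, x) \<in> Idx n i"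
    then have "card A = i" "x \<noteq> Max A" by (auto simp: Idx_def)
    then show "gov_tensor n A x (sig i \<tau>) = (if A = A' \<and> x = y then 1 else 0)"
      using gov_sig[OF _ A'(1) t(1,2)] t(3,4) by auto
  qed
qed

lemma Idx_inj: "i \<ge> 2 \<Longrightarrow> inj_on (\<lambda>(A, x). gov_tensor n A x) (Idx n i)"
proof (rule inj_onI, clarify)
  fix A x A' y assume i: "i \<ge> 2" and a: "(A, x) \<in> Idx n i" "(A', y) \<in> Idx n i"
    and eq: "gov_tensor n A x = gov_tensor n A' y"
  obtain \<sigma> where s: "\<forall>A x. (A, x) \<in> Idx n i \<longrightarrow> gov_tensor n A x \<sigma> = (if A = A' \<and> x = y then 1 else 0)"
    using key[OF i a(2)] by blast
  have "gov_tensor n A x \<sigma> = 1" using eq s a(2) by simp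
  then show "A = A' \<and> x = y" using s a(1) by (auto split: if_splits)
qed

lemma fin_Idx: "finite (Idx n i)"
  by (rule finite_subset[of _ "Pow {1..n} \<times> {1..n}"]) (auto simp: Idx_def)

lemma card_Idx: assumes "i \<ge> 2" shows "card (Idx n i) = (i - 1) * (n choose i)"
proof -
  let ?S = "{A. A \<subseteq> {1..n} \<and> card A = i}"
  have e: "Idx n i = Sigma ?S (\<lambda>A. A - {Max A})"
    by (auto simp: Idx_def)
  have c: "\<And>A. A \<in> ?S \<Longrightarrow> card (A - {Max A}) = i - 1"
  proof -
    fix A assume "A \<in> ?S"
    then have "finite A" "card A = i" "A \<noteq> {}" using assms by (auto intro: finite_subset)
    then show "card (A - {Max A}) = i - 1" by (simp add: Max_in)
  qed
  have fS: "finite ?S" by simp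
  have "card (Idx n i) = (\<Sum>A\<in>?S. card (A - {Max A}))"
    unfolding e by (rule card_SigmaI[OF fS]) (auto intro: finite_subset)
  also have "\<dots> = (\<Sum>A\<in>?S. i - 1)"
    using c by (rule sum.cong[OF refl])
  also have "\<dots> = (i - 1) * (n choose i)" by (simp add: n_subsets)
  finally show ?thesis .
qed


lemma indep_by_eval:
  assumes fin: "finite B" and ev: "\<And>v. v \<in> B \<Longrightarrow> \<exists>\<sigma>. \<forall>w\<in>B. w \<sigma> = (if w = v then 1 else 0)"
  shows "F2.independent B"
  apply (rule F2.independent_if_scalars_zero[OF fin])
  subgoal premises p for c v
  proof -
    have s: "(\<Sum>w\<in>B. F2scale (c w) w) = 0" and v: "v \<in> B" using p by auto
    obtain \<sigma> where sg: "\<forall>w\<in>B. w \<sigma> = (if w = v then 1 else 0)" using ev[OF v] by blast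
    have "0 = (\<Sum>w\<in>B. F2scale (c w) w) \<sigma>" unfolding s by simp
    also have "\<dots> = (\<Sum>w\<in>B. if w = v then c w else 0)"
      unfolding sum_fun_apply F2scale_def
    proof (intro sum.cong refl)
      fix w assume "w \<in> B"
      then have "w \<sigma> = (if w = v then 1 else 0)" using sg by blast
      then show "c w * w \<sigma> = (if w = v then c w else 0)" by simp
    qed
    also have "\<dots> = c v" using v fin by (simp add: sum.delta)
    finally show "c v = 0" by simp
  qed
  done

theorem proposition2p1:
  fixes n i :: nat
  assumes "n \<ge> 1" and "i \<ge> 2"
  shows "vector_space.dim F2scale (Gov n i) = (i - 1) * (n choose i)"
proof -
  let ?G = "{gov_tensor n A x | A x. A \<subseteq> {1..n} \<and> card A = i \<and> x \<in> A}"
  let ?f = "\<lambda>(A, x). gov_tensor n A x"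
  let ?B = "?f ` Idx n i"
  have BG: "?B \<subseteq> ?G"
  proof
    fix v assume "v \<in> ?B"
    then obtain A x where ax: "(A, x) \<in> Idx n i" and v: "v = gov_tensor n A x" by auto
    from ax have "A \<subseteq> {1..n}" "card A = i" "x \<in> A" unfolding Idx_def by auto
    then show "v \<in> ?G" using v by blast
  qed
  have GB: "?G \<subseteq> F2.span ?B"
  proof
    fix v assume "v \<in> ?G"
    then obtain A x where A: "A \<subseteq> {1..n}" "card A = i" "x \<in> A" and v: "v = gov_tensor n A x" by blast
    have fin: "finite A" using A(1) finite_subset by blast
    have mem: "\<And>z. z \<in> A - {Max A} \<Longrightarrow> gov_tensor n A z \<in> F2.span ?B"
    proof -
      fix z assume z: "z \<in> A - {Max A}"
      have "(A, z) \<in> Idx n i" using A z by (simp add: Idx_def)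
      then have "?f (A, z) \<in> ?B" by (rule imageI)
      then have "gov_tensor n A z \<in> ?B" by simp
      then show "gov_tensor n A z \<in> F2.span ?B" by (rule F2.span_base)
    qed
    have "gov_tensor n A x \<in> F2.span ?B"
    proof (cases "x = Max A")
      case False then show ?thesis using mem A False by blast
    next
      case True
      have "(\<Sum>z\<in>A. gov_tensor n A z) = 0" by (rule gov_sum_zero[OF fin A(2) assms(2)])
      moreover have "(\<Sum>z\<in>A. gov_tensor n A z) = gov_tensor n A x + (\<Sum>z\<in>A - {x}. gov_tensor n A z)"
        using fin A(3) by (simp add: sum.remove)
      ultimately have "gov_tensor n A x = - (\<Sum>z\<in>A - {x}. gov_tensor n A z)"
        by (simp add: eq_neg_iff_add_eq_0)
      moreover have "- (\<Sum>z\<in>A - {x}. gov_tensor n A z) = (\<Sum>z\<in>A - {x}. gov_tensor n A z)"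
        by (simp add: fun_eq_iff)
      ultimately have "gov_tensor n A x = (\<Sum>z\<in>A - {x}. gov_tensor n A z)" by simp
      moreover have "(\<Sum>z\<in>A - {x}. gov_tensor n A z) \<in> F2.span ?B"
      proof (rule F2.span_sum)
        fix z assume "z \<in> A - {x}" then show "gov_tensor n A z \<in> F2.span ?B" using mem True by blast
      qed
      ultimately show ?thesis by simp
    qed
    then show "v \<in> F2.span ?B" using v by simp
  qed
  have span_eq: "F2.span ?G = F2.span ?B"
  proof (rule F2.span_eq[THEN iffD2], rule conjI)
    show "?G \<subseteq> F2.span ?B" by (rule GB)
    show "?B \<subseteq> F2.span ?G" using BG F2.span_superset by (rule order_trans)
  qed
  have indep: "F2.independent ?B"
  proof (rule indep_by_eval)
    show "finite ?B" using fin_Idx by (rule finite_imageI)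
  next
    fix v assume v: "v \<in> ?B"
    from v obtain p where p: "p \<in> Idx n i" "v = ?f p" by (rule imageE)
    obtain A' y where ay: "(A', y) \<in> Idx n i" "v = gov_tensor n A' y"
      using p by (cases p) simp
    obtain \<sigma> where sg: "\<forall>A x. (A, x) \<in> Idx n i \<longrightarrow> gov_tensor n A x \<sigma> = (if A = A' \<and> x = y then 1 else 0)"
      using key[OF assms(2) ay(1)] by blast
    have ev: "\<And>w. w \<in> ?B \<Longrightarrow> w \<sigma> = (if w = v then 1 else 0)"
    proof -
      fix w assume "w \<in> ?B"
      then obtain q where q: "q \<in> Idx n i" "w = ?f q" by (rule imageE)
      obtain A x where ax: "(A, x) \<in> Idx n i" "w = gov_tensor n A x"
        using q by (cases q) simp
      have w1: "w \<sigma> = (if A = A' \<and> x = y then 1 else 0)" using sg ax by simp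
      have v1: "v \<sigma> = 1" using sg ay by simp
      show "w \<sigma> = (if w = v then 1 else 0)"
      proof (cases "A = A' \<and> x = y")
        case True then have "w = v" using ax ay by simp
        then show ?thesis using v1 by simp
      next
        case False then have "w \<sigma> = 0" using w1 by simp
        then have "w \<noteq> v" using v1 by auto
        then show ?thesis using \<open>w \<sigma> = 0\<close> by simp
      qed
    qed
    then show "\<exists>\<sigma>. \<forall>w\<in>?B. w \<sigma> = (if w = v then 1 else 0)" by blast
  qed
  have "vector_space.dim F2scale (Gov n i) = F2.dim (F2.span ?B)"
    unfolding Gov_def span_eq ..
  also have "\<dots> = card ?B" by (rule F2.dim_span_eq_card_independent[OF indep])
  also have "\<dots> = card (Idx n i)" by (rule card_image[OF Idx_inj[OF assms(2)]])
  also have "\<dots> = (i - 1) * (n choose i)" by (rule card_Idx[OF assms(2)])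
  finally show ?thesis .
qed

end
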